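(* Let $T:\mathbb{Z}_{\ge 0}\to\mathbb{R}$ be given by $T(0)=0$ and $T(2n)=T(2n-1)=n$ for all $n\ge 1$. Then $T(mn) = T(m)T(n) + T(m-1)T(n-1)$ for all integers $m,n\ge 1$. *)

theory Defs
  imports "HOL-Analysis.Analysis"
begin

end

theory Submission imports Defs begin

theorem lemma3:
  fixes T :: "nat \<Rightarrow> real" and m n :: nat
  assumes T0: "T 0 = 0"
    and Teven: "\<And>k. k \<ge> 1 \<Longrightarrow> T (2 * k) = real k"
    and Todd: "\<And>k. k \<ge> 1 \<Longrightarrow> T (2 * k - 1) = real k"
    and "m \<ge> 1" and "n \<ge> 1"
  shows "T (m * n) = T m * T n + T (m - 1) * T (n - 1)"
proof -
  have TT: "T x = real ((x + 1) div 2)" for x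
  proof (cases "x = 0")
    case True then show ?thesis using T0 by simp
  next
    case False
    show ?thesis
    proof (cases "even x")
      case True
      then obtain k where "x = 2 * k" by blast
      with False Teven[of k] show ?thesis by simp
    next
      case f: False
      then obtain k where "x = 2 * k - 1" "k \<ge> 1"
      proof -
        obtain j where "x = 2*j+1" using f by (blast elim: oddE)
        then show ?thesis using that[of "j+1"] by simp
      qed
      with Todd[of k] show ?thesis by simp
    qed
  qed
  obtain a where a: "m = Suc a" using assms(4) by (cases m) auto
  obtain b where b: "n = Suc b" using assms(5) by (cases n) auto
  have "real ((Suc a * Suc b + 1) div 2) = real ((Suc a + 1) div 2) * real ((Suc b + 1) div 2) + real ((a + 1) div 2) * real ((b + 1) div 2)"
  proof -
    have "(Suc a * Suc b + 1) div 2 = ((Suc a + 1) div 2) * ((Suc b + 1) div 2) + ((a + 1) div 2) * ((b + 1) div 2)"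
    proof (cases "even a"; cases "even b")
      assume "even a" "even b" then obtain p q where e: "a = 2*p" "b = 2*q" by blast
      have "Suc (2*p) * Suc (2*q) + 1 = 2*(2*p*q+p+q+1)" by (simp add: algebra_simps)
      then show ?thesis using e by simp
    next
      assume "even a" "odd b" then obtain p q where e: "a = 2*p" "b = 2*q+1" by (blast elim: oddE)
      have "Suc (2*p) * Suc (2*q+1) + 1 = 2*(2*p*q+2*p+q+1) + 1" by (simp add: algebra_simps)
      then show ?thesis using e by (simp add: algebra_simps)
    next
      assume "odd a" "even b" then obtain p q where e: "a = 2*p+1" "b = 2*q" by (blast elim: oddE)
      have "Suc (2*p+1) * Suc (2*q) + 1 = 2*(2*p*q+p+2*q+1) + 1" by (simp add: algebra_simps)
      then show ?thesis using e by (simp add: algebra_simps)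
    next
      assume "odd a" "odd b" then obtain p q where e: "a = 2*p+1" "b = 2*q+1" by (blast elim: oddE)
      have "Suc (2*p+1) * Suc (2*q+1) + 1 = 2*(2*p*q+2*p+2*q+2) + 1" by (simp add: algebra_simps)
      then show ?thesis using e by (simp add: algebra_simps)
    qed
    then show ?thesis by (metis of_nat_add of_nat_mult)
  qed
  then show ?thesis using a b by (simp add: TT)
qed

end
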